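(* Let $a_1,a_2\ge0$ and $D=D_{a_1,a_2}$. (a) For every horizontal grading $S_1:D_1\to\mathbb{Z}_{\ge0}$ there exist subsets $R\subset Sh\subset D_2$ such that: (i) a vertical grading $S_2:D_2\to\mathbb{Z}_{\ge0}$ forms a compatible pair with $S_1$ if and only if $S_2(v)=0$ for all $v\in Sh\setminus R$ and, for each $h\in\operatorname{supp}(S_1)$ and $v\in R$, at least one of the conditions (HGC), (VGC) holds for $h,v$; (ii) $|Sh|=\min(a_2,|S_1|)$. (b) For every vertical grading $S_2:D_2\to\mathbb{Z}_{\ge0}$ there exist subsets $R\subset Sh\subset D_1$ such that: (i) a horizontal grading $S_1:D_1\to\mathbb{Z}_{\ge0}$ forms a compatible pair with $S_2$ if and only if $S_1(h)=0$ for all $h\in Sh\setminus R$ and, for each $h\in R$ and $v\in\operatorname{supp}(S_2)$, at least one of the conditions (HGC), (VGC) holds for $h,v$; (ii) $|Sh|=\min(a_1,|S_2|)$.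
   Context: Maximal Dyck path: $D=D_{a_1,a_2}$ is the lattice path of unit East and North steps from $(0,0)$ to $(a_1,a_2)$ staying weakly below the diagonal of $[0,a_1]\times[0,a_2]$ and closest to it. $D_1$ and $D_2$ are its sets of horizontal and vertical edges. Identify $(0,0)\equiv(a_1,a_2)$ so $D$ is a cyclic sequence of edges; for edges $e,e'$, $ee'$ is the subpath from $e$ to $e'$ inclusive following $D$ cyclically (wrapping through $(0,0)$ if necessary), $ee$ is $e$ alone, and $(ee')_1,(ee')_2$ are its horizontal and vertical edges. For gradings $S_1:D_1\to\mathbb{Z}_{\ge0}$, $S_2:D_2\to\mathbb{Z}_{\ge0}$, $h\in D_1$, $v\in D_2$: condition (HGC) holds for $h,v$ if there is an edge $e$ with $he$ a proper subpath of $hv$ and $|(he)_2|=\sum_{h'\in(he)_1}S_1(h')$; condition (VGC) holds if there is an edge $e$ with $ev$ a proper subpath of $hv$ and $|(ev)_1|=\sum_{v'\in(ev)_2}S_2(v')$. $(S_1,S_2)$ is a compatible pair if for every $h\in D_1$, $v\in D_2$ at least one of (HGC), (VGC) holds. $|S_i|$ is the sum of the values of $S_i$; $\operatorname{supp}$ denotes the set of edges with nonzero value. *)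

theory Defs
  imports Main
begin

(* The maximal Dyck path D_{a1,a2} is encoded by the positions of its edges along the path:
   edge k (0 \<le> k < a1+a2) is the (k+1)-th step from (0,0).  The i-th horizontal edge
   (0-indexed, i < a1) runs from (i, floor(i*a2/a1)) to (i+1, floor(i*a2/a1)); it is preceded by
   i horizontal and floor(i*a2/a1) vertical edges, so its position is i + i*a2 div a1. *)

definition dyckH :: "nat \<Rightarrow> nat \<Rightarrow> nat set" where
  "dyckH a1 a2 = (\<lambda>i. i + i * a2 div a1) ` {..<a1}"

definition dyckV :: "nat \<Rightarrow> nat \<Rightarrow> nat set" where
  "dyckV a1 a2 = {..<a1 + a2} - dyckH a1 a2"

definition cyc :: "nat \<Rightarrow> nat \<Rightarrow> nat \<Rightarrow> nat set" where
  "cyc n i j = (if i \<le> j then {i..j} else {i..<n} \<union> {..j})"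

definition HGC :: "nat \<Rightarrow> nat \<Rightarrow> (nat \<Rightarrow> nat) \<Rightarrow> nat \<Rightarrow> nat \<Rightarrow> bool" where
  "HGC a1 a2 S1 h v =
     (\<exists>e < a1 + a2. cyc (a1 + a2) h e \<subset> cyc (a1 + a2) h v \<and>
        card (cyc (a1 + a2) h e \<inter> dyckV a1 a2) = (\<Sum>h'\<in>cyc (a1 + a2) h e \<inter> dyckH a1 a2. S1 h'))"

definition VGC :: "nat \<Rightarrow> nat \<Rightarrow> (nat \<Rightarrow> nat) \<Rightarrow> nat \<Rightarrow> nat \<Rightarrow> bool" where
  "VGC a1 a2 S2 h v =
     (\<exists>e < a1 + a2. cyc (a1 + a2) e v \<subset> cyc (a1 + a2) h v \<and>
        card (cyc (a1 + a2) e v \<inter> dyckH a1 a2) = (\<Sum>v'\<in>cyc (a1 + a2) e v \<inter> dyckV a1 a2. S2 v'))"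

(* gradings are functions nat \<Rightarrow> nat; only their values on dyckH resp. dyckV matter *)
definition compatible :: "nat \<Rightarrow> nat \<Rightarrow> (nat \<Rightarrow> nat) \<Rightarrow> (nat \<Rightarrow> nat) \<Rightarrow> bool" where
  "compatible a1 a2 S1 S2 =
     (\<forall>h\<in>dyckH a1 a2. \<forall>v\<in>dyckV a1 a2. HGC a1 a2 S1 h v \<or> VGC a1 a2 S2 h v)"

end

theory Submission imports Defs begin

lemma mem_cyc: "z \<in> cyc n x y \<longleftrightarrow> (if x \<le> y then x \<le> z \<and> z \<le> y else (x \<le> z \<and> z < n) \<or> z \<le> y)"
  by (auto simp: cyc_def)

lemma cyc_sub: "x < n \<Longrightarrow> y < n \<Longrightarrow> cyc n x y \<subseteq> {..<n}"
  by (auto simp: cyc_def)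

lemma finite_cyc: "finite (cyc n x y)" by (simp add: cyc_def)

lemma cyc_ends: "x < n \<Longrightarrow> y < n \<Longrightarrow> x \<in> cyc n x y \<and> y \<in> cyc n x y"
  by (auto simp: cyc_def)

lemma cyc_self: "cyc n x x = {x}" by (simp add: cyc_def)

definition cmax :: "(nat \<Rightarrow> int) \<Rightarrow> nat \<Rightarrow> int" where
  "cmax W k = Max (insert 0 ((\<lambda>s. \<Sum>i\<in>{s..<k}. W i) ` {..<k}))"

lemma cmax_ge0: "0 \<le> cmax W k"
  unfolding cmax_def by (rule Max_ge) auto

lemma cmax_ge: "s < k \<Longrightarrow> (\<Sum>i\<in>{s..<k}. W i) \<le> cmax W k"
  unfolding cmax_def by (rule Max_ge) auto

lemma cmax_step: "cmax W (Suc k) \<le> max 0 (cmax W k + W k)"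
proof -
  have "\<forall>x \<in> insert 0 ((\<lambda>s. \<Sum>i\<in>{s..<Suc k}. W i) ` {..<Suc k}). x \<le> max 0 (cmax W k + W k)"
  proof
    fix x assume "x \<in> insert 0 ((\<lambda>s. \<Sum>i\<in>{s..<Suc k}. W i) ` {..<Suc k})"
    then consider "x = 0" | s where "s < Suc k" "x = (\<Sum>i\<in>{s..<Suc k}. W i)" by auto
    then show "x \<le> max 0 (cmax W k + W k)"
    proof cases
      case 1 then show ?thesis by simp
    next
      case 2
      show ?thesis
      proof (cases "s = k")
        case True then show ?thesis using 2 cmax_ge0[of W k] by simp
      next
        case False
        then have "s < k" using 2 by simp
        then have "x = (\<Sum>i\<in>{s..<k}. W i) + W k" using 2 by (simp add: sum.atLeastLessThan_Suc)
        then show ?thesis using cmax_ge[OF \<open>s<k\<close>, of W] by simp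
      qed
    qed
  qed
  then show ?thesis unfolding cmax_def by (subst Max_le_iff) auto
qed

lemma linear_bound:
  fixes W :: "nat \<Rightarrow> int" and isQ :: "nat \<Rightarrow> bool"
  assumes WQ: "\<And>i. isQ i \<Longrightarrow> W i = -1" and WP: "\<And>i. \<not> isQ i \<Longrightarrow> 0 \<le> W i"
  shows "int (card {j\<in>{k0..<k0+d}. isQ j \<and> (\<exists>s<j. 0 < (\<Sum>i\<in>{s..<j}. W i))}) + cmax W (k0+d)
     \<le> cmax W k0 + (\<Sum>i\<in>{k0..<k0+d}. if isQ i then 0 else W i)"
proof (induction d)
  case 0 then show ?case by simp
next
  case (Suc d)
  let ?k = "k0 + d"
  define B where "B k = {j\<in>{k0..<k}. isQ j \<and> (\<exists>s<j. 0 < (\<Sum>i\<in>{s..<j}. W i))}" for k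
  let ?L = "isQ ?k \<and> (\<exists>s<?k. 0 < (\<Sum>i\<in>{s..<?k}. W i))"
  have setB: "B (Suc ?k) = (if ?L then insert ?k (B ?k) else B ?k)"
    unfolding B_def by (auto simp: less_Suc_eq)
  have finB: "finite (B ?k)" unfolding B_def by simp
  have nin: "?k \<notin> B ?k" unfolding B_def by simp
  have sumS: "(\<Sum>i\<in>{k0..<Suc ?k}. if isQ i then 0 else W i) = (\<Sum>i\<in>{k0..<?k}. if isQ i then 0 else W i) + (if isQ ?k then 0 else W ?k)"
    by simp
  have cs: "cmax W (Suc ?k) \<le> max 0 (cmax W ?k + W ?k)" by (rule cmax_step)
  have c0: "0 \<le> cmax W ?k" by (rule cmax_ge0)
  have IH: "int (card (B ?k)) + cmax W ?k \<le> cmax W k0 + (\<Sum>i\<in>{k0..<?k}. if isQ i then 0 else W i)"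
    using Suc.IH unfolding B_def .
  have "int (card (B (Suc ?k))) + cmax W (Suc ?k) \<le> cmax W k0 + (\<Sum>i\<in>{k0..<Suc ?k}. if isQ i then 0 else W i)"
  proof (cases "isQ ?k")
    case Q: True
    show ?thesis
    proof (cases ?L)
      case True
      then obtain s where "s < ?k" "0 < (\<Sum>i\<in>{s..<?k}. W i)" by auto
      then have "1 \<le> cmax W ?k" using cmax_ge[of s ?k W] by simp
      moreover have "card (B (Suc ?k)) = Suc (card (B ?k))" using setB True finB nin by simp
      ultimately show ?thesis using IH cs WQ[OF Q] Q sumS by simp
    next
      case False
      then have "B (Suc ?k) = B ?k" by (simp only: setB if_not_P[OF False] if_False)
      then have "card (B (Suc ?k)) = card (B ?k)" by simp
      then show ?thesis using IH cs WQ[OF Q] Q sumS c0 by simp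
    qed
  next
    case False
    then have nL: "\<not> ?L" by simp
    then have "B (Suc ?k) = B ?k" by (simp only: setB if_not_P[OF nL] if_False)
    then have "card (B (Suc ?k)) = card (B ?k)" by simp
    then show ?thesis using IH cs WP[OF False] False sumS c0 by simp
  qed
  then show ?case unfolding B_def by simp
qed


definition BadSet :: "nat \<Rightarrow> nat set \<Rightarrow> nat set \<Rightarrow> (nat \<Rightarrow> nat) \<Rightarrow> nat set" where
  "BadSet n P Q t = {q\<in>Q. \<exists>p\<in>P. t p \<noteq> 0 \<and> (\<forall>e<n. cyc n p e \<subset> cyc n p q \<longrightarrow> card (cyc n p e \<inter> Q) \<noteq> (\<Sum>x\<in>cyc n p e \<inter> P. t x))}"

lemma cyclic_bound:
  assumes disj: "P \<inter> Q = {}" and un: "P \<union> Q = {..<n}"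
  shows "card (BadSet n P Q t) \<le> (\<Sum>p\<in>P. t p)"
proof (cases "n = 0")
  case True
  then have "Q = {}" using un by auto
  then show ?thesis by (simp add: BadSet_def)
next
  case False
  then have npos: "0 < n" by simp
  define w where "w x = (if x \<in> Q then -1 else int (t x))" for x
  define W where "W i = w (i mod n)" for i
  define isQ where "isQ i = (i mod n \<in> Q)" for i
  have finP: "finite P" using un by (metis finite_Un finite_lessThan)
  have finQ: "finite Q" using un by (metis finite_Un finite_lessThan)
  have WQ: "\<And>i. isQ i \<Longrightarrow> W i = -1" by (simp add: W_def w_def isQ_def)
  have WP: "\<And>i. \<not> isQ i \<Longrightarrow> 0 \<le> W i" by (simp add: W_def w_def isQ_def)
  have Wge: "\<And>i. -1 \<le> W i" by (simp add: W_def w_def)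
  have Wn: "\<And>i. W (i + n) = W i" by (simp add: W_def)
  have Wlt: "\<And>i. i < n \<Longrightarrow> W i = w i" by (simp add: W_def)
  define LB where "LB j = (isQ j \<and> (\<exists>s<j. 0 < (\<Sum>i\<in>{s..<j}. W i)))" for j
  have lin: "int (card {j\<in>{n..<n+n}. LB j}) + cmax W (n+n)
     \<le> cmax W n + (\<Sum>i\<in>{n..<n+n}. if isQ i then 0 else W i)"
    using linear_bound[of isQ W n n, OF WQ WP] unfolding LB_def by simp
  have cmono: "cmax W n \<le> cmax W (n+n)"
  proof -
    have "\<forall>x\<in>insert 0 ((\<lambda>s. \<Sum>i\<in>{s..<n}. W i) ` {..<n}). x \<le> cmax W (n+n)"
    proof
      fix x assume "x \<in> insert 0 ((\<lambda>s. \<Sum>i\<in>{s..<n}. W i) ` {..<n})"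
      then consider "x = 0" | s where "s < n" "x = (\<Sum>i\<in>{s..<n}. W i)" by auto
      then show "x \<le> cmax W (n+n)"
      proof cases
        case 1 then show ?thesis using cmax_ge0 by simp
      next
        case 2
        have "(\<Sum>i\<in>{s+n..<n+n}. W i) = (\<Sum>i\<in>{s..<n}. W (i+n))" by (rule sum.shift_bounds_nat_ivl)
        also have "\<dots> = x" using 2 Wn by simp
        finally show ?thesis using cmax_ge[of "s+n" "n+n" W] 2 by simp
      qed
    qed
    then show ?thesis unfolding cmax_def[of W n] by (subst Max_le_iff) auto
  qed
  have tok: "(\<Sum>i\<in>{n..<n+n}. if isQ i then 0 else W i) = int (\<Sum>p\<in>P. t p)"
  proof -
    have "(\<Sum>i\<in>{0+n..<n+n}. if isQ i then 0 else W i) = (\<Sum>i\<in>{0..<n}. if isQ (i+n) then 0 else W (i+n))"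
      by (rule sum.shift_bounds_nat_ivl)
    also have "{0..<n} = P \<union> Q" using un by (simp add: atLeast0LessThan)
    also have "(\<Sum>i\<in>P \<union> Q. if isQ (i+n) then 0 else W (i+n)) = (\<Sum>i\<in>P \<union> Q. if i \<in> Q then 0 else w i)"
    proof (rule sum.cong)
      fix i assume "i \<in> P \<union> Q"
      then have "i < n" using un by blast
      then show "(if isQ (i+n) then 0 else W (i+n)) = (if i \<in> Q then 0 else w i)"
        by (simp add: isQ_def W_def)
    qed simp
    also have "\<dots> = (\<Sum>i\<in>P. if i \<in> Q then 0 else w i) + (\<Sum>i\<in>Q. if i \<in> Q then 0 else w i)"
      by (rule sum.union_disjoint[OF finP finQ disj])
    also have "(\<Sum>i\<in>Q. if i \<in> Q then 0 else w i) = 0" by simp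
    also have "(\<Sum>i\<in>P. if i \<in> Q then 0 else w i) = (\<Sum>i\<in>P. int (t i))"
    proof (rule sum.cong)
      fix i assume "i \<in> P"
      then have "i \<notin> Q" using disj by blast
      then show "(if i \<in> Q then 0 else w i) = int (t i)" by (simp add: w_def)
    qed simp
    finally show ?thesis by simp
  qed
  have key: "LB (q + n)" if qB: "q \<in> BadSet n P Q t" for q
  proof -
    from qB obtain p where pP: "p \<in> P" and tp: "t p \<noteq> 0" and qQ: "q \<in> Q"
      and H: "\<And>e. e < n \<Longrightarrow> cyc n p e \<subset> cyc n p q \<Longrightarrow> card (cyc n p e \<inter> Q) \<noteq> (\<Sum>x\<in>cyc n p e \<inter> P. t x)"
      unfolding BadSet_def by blast
    have pn: "p < n" and qn: "q < n" using pP qQ un by auto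
    have pq: "p \<noteq> q" using pP qQ disj by auto
    have sumC: "(\<Sum>x\<in>C. w x) = int (\<Sum>x\<in>C \<inter> P. t x) - int (card (C \<inter> Q))" if "C \<subseteq> {..<n}" for C
    proof -
      have fC: "finite C" using that finite_subset by auto
      have CE: "C = (C \<inter> P) \<union> (C \<inter> Q)" using that un by auto
      have "(\<Sum>x\<in>(C \<inter> P) \<union> (C \<inter> Q). w x) = (\<Sum>x\<in>C \<inter> P. w x) + (\<Sum>x\<in>C \<inter> Q. w x)"
        using fC disj by (intro sum.union_disjoint) auto
      then have "(\<Sum>x\<in>C. w x) = (\<Sum>x\<in>C \<inter> P. w x) + (\<Sum>x\<in>C \<inter> Q. w x)"
        by (simp only: CE[symmetric])
      also have "(\<Sum>x\<in>C \<inter> P. w x) = (\<Sum>x\<in>C \<inter> P. int (t x))"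
        using disj by (intro sum.cong) (auto simp: w_def)
      also have "(\<Sum>x\<in>C \<inter> Q. w x) = - int (card (C \<inter> Q))"
        by (simp add: w_def)
      finally show ?thesis by simp
    qed
    have ne: "(\<Sum>x\<in>cyc n p e. w x) \<noteq> 0" if "e < n" "cyc n p e \<subset> cyc n p q" for e
    proof -
      have "int (card (cyc n p e \<inter> Q)) \<noteq> int (\<Sum>x\<in>cyc n p e \<inter> P. t x)" using H[OF that] by (metis of_nat_eq_iff)
      then show ?thesis using sumC[OF cyc_sub[OF pn \<open>e<n\<close>]] by (simp only: of_nat_sum)
    qed
    define s where "s = (if p < q then p + n else p)"
    have sq: "s < q + n" using pn pq unfolding s_def by auto
    have rep: "e mod n < n \<and> cyc n p (e mod n) \<subset> cyc n p q \<and> (\<Sum>i\<in>{s..e}. W i) = (\<Sum>x\<in>cyc n p (e mod n). w x)"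
      if "s \<le> e" "e < q + n" for e
    proof (cases "p < q")
      case True
      then have sd: "s = p + n" by (simp add: s_def)
      define e' where "e' = e - n"
      have ee: "e = e' + n" "p \<le> e'" "e' < q" using that sd unfolding e'_def by auto
      have emod: "e mod n = e'" using ee qn by simp
      have c1: "cyc n p e' = {p..e'}" using ee by (simp add: cyc_def)
      have c2: "cyc n p q = {p..q}" using True by (simp add: cyc_def)
      have "(\<Sum>i\<in>{p+n..e'+n}. W i) = (\<Sum>i\<in>{p..e'}. W (i+n))" by (rule sum.shift_bounds_cl_nat_ivl)
      also have "\<dots> = (\<Sum>i\<in>{p..e'}. w i)" using ee qn Wn Wlt by (intro sum.cong) auto
      finally show ?thesis using ee emod c1 c2 sd qn by auto
    next
      case False
      then have pq2: "q < p" using pq by simp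
      then have sd: "s = p" by (simp add: s_def)
      have c2: "cyc n p q = {p..<n} \<union> {..q}" using pq2 by (simp add: cyc_def)
      show ?thesis
      proof (cases "e < n")
        case True
        have emod: "e mod n = e" using True by simp
        have c1: "cyc n p e = {p..e}" using that sd by (simp add: cyc_def)
        have "(\<Sum>i\<in>{p..e}. W i) = (\<Sum>i\<in>{p..e}. w i)" using True Wlt by (intro sum.cong) auto
        moreover have "{p..e} \<subset> {p..<n} \<union> {..q}"
        proof -
          have "q \<notin> {p..e}" using pq2 by simp
          moreover have "q \<in> {p..<n} \<union> {..q}" by simp
          moreover have "{p..e} \<subseteq> {p..<n} \<union> {..q}" using True by auto
          ultimately show ?thesis by blast
        qed
        ultimately show ?thesis using emod c1 c2 sd True by auto
      next
        case False
        define e' where "e' = e - n"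
        have ee: "e = e' + n" "e' < q" using that False unfolding e'_def by auto
        have emod: "e mod n = e'" using ee qn by simp
        have c1: "cyc n p e' = {p..<n} \<union> {..e'}" using ee pq2 by (simp add: cyc_def)
        have split: "{p..e} = {p..<n} \<union> {n..e}" using pn ee by auto
        have "(\<Sum>i\<in>{p..e}. W i) = (\<Sum>i\<in>{p..<n}. W i) + (\<Sum>i\<in>{n..e}. W i)"
          unfolding split by (rule sum.union_disjoint) auto
        also have "(\<Sum>i\<in>{p..<n}. W i) = (\<Sum>i\<in>{p..<n}. w i)" using Wlt by (intro sum.cong) auto
        also have "(\<Sum>i\<in>{n..e}. W i) = (\<Sum>i\<in>{..e'}. w i)"
        proof -
          have "(\<Sum>i\<in>{0+n..e'+n}. W i) = (\<Sum>i\<in>{0..e'}. W (i+n))" by (rule sum.shift_bounds_cl_nat_ivl)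
          also have "\<dots> = (\<Sum>i\<in>{0..e'}. w i)" using ee qn Wn Wlt by (intro sum.cong) auto
          finally show ?thesis using ee by (simp add: atLeast0AtMost)
        qed
        also have "(\<Sum>i\<in>{p..<n}. w i) + (\<Sum>i\<in>{..e'}. w i) = (\<Sum>i\<in>{p..<n} \<union> {..e'}. w i)"
          using ee pq2 by (intro sum.union_disjoint[symmetric]) auto
        finally have "(\<Sum>i\<in>{p..e}. W i) = (\<Sum>x\<in>cyc n p e'. w x)" using c1 by simp
        moreover have "{p..<n} \<union> {..e'} \<subset> {p..<n} \<union> {..q}"
        proof -
          have "q \<notin> {p..<n} \<union> {..e'}" using pq2 ee by simp
          moreover have "q \<in> {p..<n} \<union> {..q}" by simp
          moreover have "{p..<n} \<union> {..e'} \<subseteq> {p..<n} \<union> {..q}" using ee by auto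
          ultimately show ?thesis by blast
        qed
        ultimately show ?thesis using emod c1 c2 sd ee qn by auto
      qed
    qed
    have pos: "s \<le> e \<Longrightarrow> e < q + n \<Longrightarrow> 0 < (\<Sum>i\<in>{s..e}. W i)" for e
    proof (induct e rule: dec_induct)
      case base
      have "s mod n = p" using pn by (simp add: s_def)
      then have "W s = int (t p)" using pP disj by (auto simp: W_def w_def)
      then show ?case using tp by simp
    next
      case (step m)
      have "0 < (\<Sum>i\<in>{s..m}. W i)" using step by simp
      moreover have "(\<Sum>i\<in>{s..Suc m}. W i) = (\<Sum>i\<in>{s..m}. W i) + W (Suc m)"
        using step by simp
      moreover have "(\<Sum>i\<in>{s..Suc m}. W i) \<noteq> 0"
        using rep[of "Suc m"] ne[of "Suc m mod n"] step by auto
      ultimately show ?case using Wge[of "Suc m"] by linarith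
    qed
    have "q + n = Suc (q + n - 1)" using npos by simp
    then have "{s..<q+n} = {s..q+n-1}" by (metis atLeastLessThanSuc_atLeastAtMost)
    then have "0 < (\<Sum>i\<in>{s..<q+n}. W i)" using pos[of "q+n-1"] sq by simp
    moreover have "isQ (q + n)" using qQ qn by (simp add: isQ_def)
    ultimately show ?thesis unfolding LB_def using sq by blast
  qed
  have sub: "(\<lambda>q. q + n) ` BadSet n P Q t \<subseteq> {j\<in>{n..<n+n}. LB j}"
  proof
    fix j assume "j \<in> (\<lambda>q. q + n) ` BadSet n P Q t"
    then obtain q where "q \<in> BadSet n P Q t" "j = q + n" by auto
    moreover then have "q < n" using un unfolding BadSet_def by auto
    ultimately show "j \<in> {j\<in>{n..<n+n}. LB j}" using key by auto
  qed
  have "card (BadSet n P Q t) = card ((\<lambda>q. q + n) ` BadSet n P Q t)"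
    by (simp add: card_image)
  also have "\<dots> \<le> card {j\<in>{n..<n+n}. LB j}" by (rule card_mono[OF _ sub]) simp
  finally have "int (card (BadSet n P Q t)) \<le> int (\<Sum>p\<in>P. t p)"
    using lin cmono tok by linarith
  then show ?thesis by (metis of_nat_le_iff)
qed


lemma dyck_basic:
  fixes a1 a2 :: nat
  shows "dyckH a1 a2 \<subseteq> {..<a1+a2}" "dyckH a1 a2 \<inter> dyckV a1 a2 = {}"
    "dyckH a1 a2 \<union> dyckV a1 a2 = {..<a1+a2}" "card (dyckH a1 a2) = a1" "card (dyckV a1 a2) = a2"
proof -
  define f where "f i = i + i * a2 div a1" for i :: nat
  have sm: "strict_mono f"
  proof (rule strict_monoI)
    fix i j :: nat assume "i < j"
    moreover have "i * a2 div a1 \<le> j * a2 div a1" using \<open>i<j\<close> by (intro div_le_mono mult_le_mono1) simp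
    ultimately show "f i < f j" by (simp add: f_def)
  qed
  have H: "dyckH a1 a2 = f ` {..<a1}" by (simp add: dyckH_def f_def)
  show sub: "dyckH a1 a2 \<subseteq> {..<a1+a2}"
  proof
    fix x assume "x \<in> dyckH a1 a2"
    then obtain i where i: "i < a1" "x = i + i * a2 div a1" by (auto simp: dyckH_def)
    have "i * a2 div a1 \<le> a1 * a2 div a1" using i by (intro div_le_mono mult_le_mono1) simp
    also have "\<dots> = a2" using i by simp
    finally show "x \<in> {..<a1+a2}" using i by simp
  qed
  show "dyckH a1 a2 \<inter> dyckV a1 a2 = {}" by (auto simp: dyckV_def)
  show "dyckH a1 a2 \<union> dyckV a1 a2 = {..<a1+a2}" using sub by (auto simp: dyckV_def)
  show cH: "card (dyckH a1 a2) = a1" unfolding H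
    by (subst card_image) (auto intro: strict_mono_imp_inj_on[OF sm])
  show "card (dyckV a1 a2) = a2" unfolding dyckV_def
    using sub cH finite_subset[OF sub] by (subst card_Diff_subset) auto
qed

lemma exists_Sh:
  assumes "B \<subseteq> V" "finite V" "card B \<le> m" "m \<le> card V"
  shows "\<exists>Sh. B \<subseteq> Sh \<and> Sh \<subseteq> V \<and> card Sh = m"
proof -
  have fB: "finite B" using assms finite_subset by blast
  have "m - card B \<le> card (V - B)" using assms by (simp add: card_Diff_subset fB)
  then obtain X where X: "X \<subseteq> V - B" "card X = m - card B" "finite X"
    by (rule obtain_subset_with_card_n)
  have "card (B \<union> X) = card B + card X" using X fB by (subst card_Un_disjoint) auto
  then show ?thesis using X assms by (intro exI[of _ "B \<union> X"]) auto
qed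

definition rv :: "nat \<Rightarrow> nat \<Rightarrow> nat" where "rv n x = n - Suc x"

lemma rv_lt: "x < n \<Longrightarrow> rv n x < n" by (simp add: rv_def)
lemma rv_rv: "x < n \<Longrightarrow> rv n (rv n x) = x" by (simp add: rv_def)
lemma rv_inj: "inj_on (rv n) {..<n}" by (rule inj_onI) (simp add: rv_def)
lemma rv_rv_img: "A \<subseteq> {..<n} \<Longrightarrow> rv n ` rv n ` A = A"
  by (auto simp: image_image rv_rv subset_eq)
lemma rv_img_sub: "A \<subseteq> {..<n} \<Longrightarrow> rv n ` A \<subseteq> {..<n}" by (auto simp: rv_lt subset_eq)
lemma rv_img_all: "rv n ` {..<n} = {..<n}"
  using rv_img_sub[of "{..<n}" n] rv_rv_img[of "{..<n}" n] by (metis image_mono subset_antisym order_refl)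

lemma rv_mem_cyc: "z < n \<Longrightarrow> x < n \<Longrightarrow> y < n \<Longrightarrow> (rv n z \<in> cyc n (rv n y) (rv n x)) = (z \<in> cyc n x y)"
  unfolding mem_cyc rv_def by auto

lemma cyc_rev: assumes "x < n" "y < n" shows "cyc n x y = rv n ` cyc n (rv n y) (rv n x)"
proof
  show "cyc n x y \<subseteq> rv n ` cyc n (rv n y) (rv n x)"
  proof
    fix z assume z: "z \<in> cyc n x y"
    then have "z < n" using cyc_sub[OF assms] by auto
    then show "z \<in> rv n ` cyc n (rv n y) (rv n x)"
      using rv_mem_cyc[of z n x y] assms z rv_rv by (metis image_eqI)
  qed
  show "rv n ` cyc n (rv n y) (rv n x) \<subseteq> cyc n x y"
  proof
    fix z assume "z \<in> rv n ` cyc n (rv n y) (rv n x)"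
    then obtain u where u: "u \<in> cyc n (rv n y) (rv n x)" "z = rv n u" by auto
    then have un: "u < n" using cyc_sub[OF rv_lt rv_lt] assms by blast
    then have "rv n z \<in> cyc n (rv n y) (rv n x)" using u rv_rv by simp
    then show "z \<in> cyc n x y" using rv_mem_cyc[of z n x y] assms u un rv_lt by simp
  qed
qed

lemma inj_psubset: assumes "inj_on f C" "A \<subset> B" "B \<subseteq> C" shows "f ` A \<subset> f ` B"
proof -
  have "f ` A \<subseteq> f ` B" using assms by auto
  moreover obtain b where "b \<in> B" "b \<notin> A" using assms by auto
  moreover have "f b \<notin> f ` A"
  proof
    assume "f b \<in> f ` A"
    then obtain a where "a \<in> A" "f a = f b" by auto
    then have "a = b" using assms \<open>b\<in>B\<close> by (meson inj_on_def psubsetD subsetD)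
    then show False using \<open>a\<in>A\<close> \<open>b\<notin>A\<close> by simp
  qed
  ultimately show ?thesis using \<open>b\<in>B\<close> by blast
qed

theorem lemma4p4:
  fixes a1 a2 :: nat
  shows
  "(\<forall>S1 :: nat \<Rightarrow> nat. \<exists>R Sh. R \<subseteq> Sh \<and> Sh \<subseteq> dyckV a1 a2 \<and>
      (\<forall>S2 :: nat \<Rightarrow> nat. compatible a1 a2 S1 S2 \<longleftrightarrow>
          ((\<forall>v\<in>Sh - R. S2 v = 0) \<and>
           (\<forall>h\<in>{h\<in>dyckH a1 a2. S1 h \<noteq> 0}. \<forall>v\<in>R. HGC a1 a2 S1 h v \<or> VGC a1 a2 S2 h v))) \<and>
      card Sh = min a2 (\<Sum>h\<in>dyckH a1 a2. S1 h))
   \<and>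
   (\<forall>S2 :: nat \<Rightarrow> nat. \<exists>R Sh. R \<subseteq> Sh \<and> Sh \<subseteq> dyckH a1 a2 \<and>
      (\<forall>S1 :: nat \<Rightarrow> nat. compatible a1 a2 S1 S2 \<longleftrightarrow>
          ((\<forall>h\<in>Sh - R. S1 h = 0) \<and>
           (\<forall>h\<in>R. \<forall>v\<in>{v\<in>dyckV a1 a2. S2 v \<noteq> 0}. HGC a1 a2 S1 h v \<or> VGC a1 a2 S2 h v))) \<and>
      card Sh = min a1 (\<Sum>v\<in>dyckV a1 a2. S2 v))"
proof -
  define n where "n = a1 + a2"
  define H where "H = dyckH a1 a2"
  define V where "V = dyckV a1 a2"
  have Hn: "H \<subseteq> {..<n}" and disj: "H \<inter> V = {}" and un: "H \<union> V = {..<n}"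
    and cH: "card H = a1" and cV: "card V = a2"
    using dyck_basic[of a1 a2] by (simp_all add: H_def V_def n_def)
  have Vn: "V \<subseteq> {..<n}" using un by auto
  have fH: "finite H" and fV: "finite V" using Hn Vn finite_subset by auto
  have hgc_triv: "HGC a1 a2 S1 h v" if "h \<in> H" "v \<in> V" "S1 h = 0" for S1 h v
  proof -
    have hn: "h < n" and vn: "v < n" using that Hn Vn by auto
    have hv: "h \<noteq> v" using that disj by auto
    have "cyc n h h \<subset> cyc n h v" using cyc_ends[OF hn vn] hv by (auto simp: cyc_self)
    moreover have "card (cyc n h h \<inter> V) = (\<Sum>h'\<in>cyc n h h \<inter> H. S1 h')"
      using that disj by (auto simp: cyc_self)
    ultimately show ?thesis unfolding HGC_def using hn by (auto simp: n_def H_def V_def)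
  qed
  have vgc_triv: "VGC a1 a2 S2 h v" if "h \<in> H" "v \<in> V" "S2 v = 0" for S2 h v
  proof -
    have hn: "h < n" and vn: "v < n" using that Hn Vn by auto
    have hv: "h \<noteq> v" using that disj by auto
    have "cyc n v v \<subset> cyc n h v" using cyc_ends[OF hn vn] hv by (auto simp: cyc_self)
    moreover have "card (cyc n v v \<inter> H) = (\<Sum>v'\<in>cyc n v v \<inter> V. S2 v')"
      using that disj by (auto simp: cyc_self)
    ultimately show ?thesis unfolding VGC_def using vn by (auto simp: n_def H_def V_def)
  qed
  have partA: "\<exists>R Sh. R \<subseteq> Sh \<and> Sh \<subseteq> V \<and>
      (\<forall>S2 :: nat \<Rightarrow> nat. compatible a1 a2 S1 S2 \<longleftrightarrow>
          ((\<forall>v\<in>Sh - R. S2 v = 0) \<and>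
           (\<forall>h\<in>{h\<in>H. S1 h \<noteq> 0}. \<forall>v\<in>R. HGC a1 a2 S1 h v \<or> VGC a1 a2 S2 h v))) \<and>
      card Sh = min a2 (\<Sum>h\<in>H. S1 h)" for S1 :: "nat \<Rightarrow> nat"
  proof -
    define Bad where "Bad = {v\<in>V. \<exists>h\<in>H. S1 h \<noteq> 0 \<and> \<not> HGC a1 a2 S1 h v}"
    have "Bad \<subseteq> BadSet n H V S1"
      unfolding Bad_def BadSet_def HGC_def by (auto simp: n_def H_def V_def)
    then have "card Bad \<le> card (BadSet n H V S1)" by (rule card_mono[rotated]) (simp add: BadSet_def fV)
    also have "\<dots> \<le> (\<Sum>h\<in>H. S1 h)" by (rule cyclic_bound[OF disj un])
    finally have b1: "card Bad \<le> (\<Sum>h\<in>H. S1 h)" .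
    have BV: "Bad \<subseteq> V" by (auto simp: Bad_def)
    then have "card Bad \<le> a2" using cV fV card_mono by metis
    then obtain Sh where Sh: "Bad \<subseteq> Sh" "Sh \<subseteq> V" "card Sh = min a2 (\<Sum>h\<in>H. S1 h)"
      using exists_Sh[OF BV fV, of "min a2 (\<Sum>h\<in>H. S1 h)"] b1 cV by auto
    have "compatible a1 a2 S1 S2 \<longleftrightarrow>
          ((\<forall>v\<in>Sh - Sh. S2 v = 0) \<and>
           (\<forall>h\<in>{h\<in>H. S1 h \<noteq> 0}. \<forall>v\<in>Sh. HGC a1 a2 S1 h v \<or> VGC a1 a2 S2 h v))" for S2
    proof
      assume "compatible a1 a2 S1 S2"
      then show "(\<forall>v\<in>Sh - Sh. S2 v = 0) \<and>
           (\<forall>h\<in>{h\<in>H. S1 h \<noteq> 0}. \<forall>v\<in>Sh. HGC a1 a2 S1 h v \<or> VGC a1 a2 S2 h v)"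
        using Sh unfolding compatible_def H_def V_def by auto
    next
      assume R: "(\<forall>v\<in>Sh - Sh. S2 v = 0) \<and>
           (\<forall>h\<in>{h\<in>H. S1 h \<noteq> 0}. \<forall>v\<in>Sh. HGC a1 a2 S1 h v \<or> VGC a1 a2 S2 h v)"
      show "compatible a1 a2 S1 S2"
        unfolding compatible_def
      proof (intro ballI)
        fix h v assume h: "h \<in> dyckH a1 a2" and v: "v \<in> dyckV a1 a2"
        then have h': "h \<in> H" and v': "v \<in> V" by (simp_all add: H_def V_def)
        show "HGC a1 a2 S1 h v \<or> VGC a1 a2 S2 h v"
        proof (cases "S1 h = 0")
          case True then show ?thesis using hgc_triv h' v' by blast
        next
          case False
          show ?thesis
          proof (cases "v \<in> Sh")
            case True then show ?thesis using R False h' by blast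
          next
            case nS: False
            then have "v \<notin> Bad" using Sh by blast
            then show ?thesis using v' h' False unfolding Bad_def by blast
          qed
        qed
      qed
    qed
    then show ?thesis using Sh by (intro exI[of _ Sh] exI[of _ Sh]) auto
  qed
  have partB: "\<exists>R Sh. R \<subseteq> Sh \<and> Sh \<subseteq> H \<and>
      (\<forall>S1 :: nat \<Rightarrow> nat. compatible a1 a2 S1 S2 \<longleftrightarrow>
          ((\<forall>h\<in>Sh - R. S1 h = 0) \<and>
           (\<forall>h\<in>R. \<forall>v\<in>{v\<in>V. S2 v \<noteq> 0}. HGC a1 a2 S1 h v \<or> VGC a1 a2 S2 h v))) \<and>
      card Sh = min a1 (\<Sum>v\<in>V. S2 v)" for S2 :: "nat \<Rightarrow> nat"
  proof -
    define Bad where "Bad = {h\<in>H. \<exists>v\<in>V. S2 v \<noteq> 0 \<and> \<not> VGC a1 a2 S2 h v}"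
    define r where "r = rv n"
    have rinj: "inj_on r {..<n}" by (simp add: r_def rv_inj)
    have rH: "r ` H \<subseteq> {..<n}" and rV: "r ` V \<subseteq> {..<n}" using rv_img_sub Hn Vn by (auto simp: r_def)
    have disj': "r ` V \<inter> r ` H = {}"
      using inj_on_image_Int[OF rinj Vn Hn] disj by auto
    have "r ` V \<union> r ` H = r ` (H \<union> V)" by auto
    then have un': "r ` V \<union> r ` H = {..<n}"
      using un rv_img_all[of n] by (simp add: r_def)
    have inBad: "r h \<in> BadSet n (r ` V) (r ` H) (S2 \<circ> r)" if hB: "h \<in> Bad" for h
    proof -
      obtain v where h: "h \<in> H" and v: "v \<in> V" and s2: "S2 v \<noteq> 0" and nv: "\<not> VGC a1 a2 S2 h v"
        using hB unfolding Bad_def by blast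
      have hn: "h < n" and vn: "v < n" using h v Hn Vn by auto
      have "(S2 \<circ> r) (r v) = S2 v" using vn by (simp add: r_def rv_rv)
      moreover have "card (cyc n (r v) e \<inter> r ` H) \<noteq> (\<Sum>x\<in>cyc n (r v) e \<inter> r ` V. (S2 \<circ> r) x)"
        if e: "e < n" "cyc n (r v) e \<subset> cyc n (r v) (r h)" for e
      proof -
        define e0 where "e0 = r e"
        have e0n: "e0 < n" and re0: "r e0 = e" using e by (simp_all add: e0_def r_def rv_lt rv_rv)
        have c1: "cyc n e0 v = r ` cyc n (r v) e" using cyc_rev[OF e0n vn] re0 by (simp add: r_def)
        have c2: "cyc n h v = r ` cyc n (r v) (r h)" using cyc_rev[OF hn vn] by (simp add: r_def)
        have sub1: "cyc n (r v) e \<subseteq> {..<n}" using cyc_sub e vn by (simp add: r_def rv_lt)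
        have sub2: "cyc n (r v) (r h) \<subseteq> {..<n}" using cyc_sub hn vn by (simp add: r_def rv_lt)
        have "cyc n e0 v \<subset> cyc n h v" unfolding c1 c2 by (rule inj_psubset[OF rinj e(2) sub2])
        then have neq: "card (cyc n e0 v \<inter> H) \<noteq> (\<Sum>v'\<in>cyc n e0 v \<inter> V. S2 v')"
          using nv e0n unfolding VGC_def by (auto simp: n_def H_def V_def)
        have rrH: "r ` r ` H = H" and rrV: "r ` r ` V = V" using rv_rv_img Hn Vn by (auto simp: r_def)
        have i1: "cyc n e0 v \<inter> H = r ` (cyc n (r v) e \<inter> r ` H)"
          unfolding c1 using inj_on_image_Int[OF rinj sub1 rH] rrH by simp
        have i2: "cyc n e0 v \<inter> V = r ` (cyc n (r v) e \<inter> r ` V)"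
          unfolding c1 using inj_on_image_Int[OF rinj sub1 rV] rrV by simp
        have injs: "inj_on r (cyc n (r v) e \<inter> X)" for X using inj_on_subset[OF rinj, of "cyc n (r v) e \<inter> X"] sub1 by blast
        have "card (cyc n e0 v \<inter> H) = card (cyc n (r v) e \<inter> r ` H)"
          unfolding i1 by (rule card_image[OF injs])
        moreover have "(\<Sum>v'\<in>cyc n e0 v \<inter> V. S2 v') = (\<Sum>x\<in>cyc n (r v) e \<inter> r ` V. (S2 \<circ> r) x)"
          unfolding i2 by (rule sum.reindex[OF injs])
        ultimately show ?thesis using neq by simp
      qed
      ultimately have "r v \<in> r ` V \<and> (S2 \<circ> r) (r v) \<noteq> 0 \<and> (\<forall>e<n. cyc n (r v) e \<subset> cyc n (r v) (r h) \<longrightarrow> card (cyc n (r v) e \<inter> r ` H) \<noteq> (\<Sum>x\<in>cyc n (r v) e \<inter> r ` V. (S2 \<circ> r) x))"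
        using v s2 by auto
      then show ?thesis unfolding BadSet_def using h by blast
    qed
    have "Bad \<subseteq> r ` BadSet n (r ` V) (r ` H) (S2 \<circ> r)"
    proof
      fix h assume "h \<in> Bad"
      then have "h \<in> H" "r h \<in> BadSet n (r ` V) (r ` H) (S2 \<circ> r)" using inBad by (auto simp: Bad_def)
      moreover have "r (r h) = h" using \<open>h \<in> H\<close> Hn by (auto simp: r_def rv_rv)
      ultimately show "h \<in> r ` BadSet n (r ` V) (r ` H) (S2 \<circ> r)" by (metis image_eqI)
    qed
    then have "card Bad \<le> card (r ` BadSet n (r ` V) (r ` H) (S2 \<circ> r))"
      by (rule card_mono[rotated]) (simp add: BadSet_def finite_subset[OF rH])
    also have "\<dots> \<le> card (BadSet n (r ` V) (r ` H) (S2 \<circ> r))" by (rule card_image_le) (simp add: BadSet_def finite_subset[OF rH])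
    also have "\<dots> \<le> (\<Sum>x\<in>r ` V. (S2 \<circ> r) x)" by (rule cyclic_bound[OF disj' un'])
    also have "\<dots> = (\<Sum>x\<in>V. (S2 \<circ> r \<circ> r) x)" by (rule sum.reindex[OF inj_on_subset[OF rinj Vn]])
    also have "\<dots> = (\<Sum>x\<in>V. S2 x)" using Vn by (intro sum.cong) (auto simp: r_def rv_rv)
    finally have b1: "card Bad \<le> (\<Sum>v\<in>V. S2 v)" .
    have BH: "Bad \<subseteq> H" by (auto simp: Bad_def)
    then have "card Bad \<le> a1" using cH fH card_mono by metis
    then obtain Sh where Sh: "Bad \<subseteq> Sh" "Sh \<subseteq> H" "card Sh = min a1 (\<Sum>v\<in>V. S2 v)"
      using exists_Sh[OF BH fH, of "min a1 (\<Sum>v\<in>V. S2 v)"] b1 cH by auto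
    have "compatible a1 a2 S1 S2 \<longleftrightarrow>
          ((\<forall>h\<in>Sh - Sh. S1 h = 0) \<and>
           (\<forall>h\<in>Sh. \<forall>v\<in>{v\<in>V. S2 v \<noteq> 0}. HGC a1 a2 S1 h v \<or> VGC a1 a2 S2 h v))" for S1
    proof
      assume "compatible a1 a2 S1 S2"
      then show "(\<forall>h\<in>Sh - Sh. S1 h = 0) \<and>
           (\<forall>h\<in>Sh. \<forall>v\<in>{v\<in>V. S2 v \<noteq> 0}. HGC a1 a2 S1 h v \<or> VGC a1 a2 S2 h v)"
        using Sh unfolding compatible_def H_def V_def by auto
    next
      assume R: "(\<forall>h\<in>Sh - Sh. S1 h = 0) \<and>
           (\<forall>h\<in>Sh. \<forall>v\<in>{v\<in>V. S2 v \<noteq> 0}. HGC a1 a2 S1 h v \<or> VGC a1 a2 S2 h v)"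
      show "compatible a1 a2 S1 S2"
        unfolding compatible_def
      proof (intro ballI)
        fix h v assume h: "h \<in> dyckH a1 a2" and v: "v \<in> dyckV a1 a2"
        then have h': "h \<in> H" and v': "v \<in> V" by (simp_all add: H_def V_def)
        show "HGC a1 a2 S1 h v \<or> VGC a1 a2 S2 h v"
        proof (cases "S2 v = 0")
          case True then show ?thesis using vgc_triv h' v' by blast
        next
          case False
          show ?thesis
          proof (cases "h \<in> Sh")
            case True then show ?thesis using R False v' by blast
          next
            case nS: False
            then have "h \<notin> Bad" using Sh by blast
            then show ?thesis using v' h' False unfolding Bad_def by blast
          qed
        qed
      qed
    qed
    then show ?thesis using Sh by (intro exI[of _ Sh] exI[of _ Sh]) auto
  qed
  show ?thesis using partA partB unfolding H_def V_def by blast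
qed

end
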